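(* Let $m,n\geq 2$. Let $\pi\in S(\mathbb{Z}_m)$ and $\pi_x\in S(\mathbb{Z}_n)$ for each $x\in\mathbb{Z}_m$, and define $\sigma\in S(\mathbb{Z}_m\times\mathbb{Z}_n)$ by $\sigma(x,y)=(\pi(x),\pi_x(y))$. Let $c\in S(\mathbb{Z}_m\times\mathbb{Z}_n)$ be given by $c(x,y)=(x+1,y)$ if $x\neq m-1$ and $c(x,y)=(x+1,y+1)$ if $x=m-1$. Let $i\in\mathbb{Z}_m$, let $b$ be a positive integer, and let $t$ be an integer such that the permutation $y\mapsto\pi_i(y+t)$ of $\mathbb{Z}_n$ has at least $b$ cycles. Then there is an integer $k$ such that $\sigma c^k$ has at least $b+1$ cycles.
   Context: $S(X)$ denotes the set of bijections of a finite set $X$; the number of cycles of a permutation counts fixed points as cycles. (Under the bijection $\mathbb{Z}_{mn}\to\mathbb{Z}_m\times\mathbb{Z}_n$, $r+mt\mapsto(r,t)$ for $0\le r<m$, $0\le t<n$, the map $c$ corresponds to $z\mapsto z+1$.) *)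

theory Defs
  imports Main
begin

definition num_cycles :: "('a \<Rightarrow> 'a) \<Rightarrow> 'a set \<Rightarrow> nat" where
  "num_cycles p X = card ((\<lambda>x. {(p ^^ k) x | k. True}) ` X)"

text \<open>Z_m x Z_n represented as {0..<m} x {0..<n}.\<close>
definition grid :: "nat \<Rightarrow> nat \<Rightarrow> (nat \<times> nat) set" where
  "grid m n = {..<m} \<times> {..<n}"

definition cmap :: "nat \<Rightarrow> nat \<Rightarrow> nat \<times> nat \<Rightarrow> nat \<times> nat" where
  "cmap m n = (\<lambda>(x, y). if x \<noteq> m - 1 then ((x + 1) mod m, y)
                        else ((x + 1) mod m, (y + 1) mod n))"

definition cpow :: "nat \<Rightarrow> nat \<Rightarrow> int \<Rightarrow> nat \<times> nat \<Rightarrow> nat \<times> nat" where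
  "cpow m n k = (if k \<ge> 0 then cmap m n ^^ nat k
                 else inv_into (grid m n) (cmap m n) ^^ nat (- k))"

definition sigma :: "(nat \<Rightarrow> nat) \<Rightarrow> (nat \<Rightarrow> nat \<Rightarrow> nat) \<Rightarrow> nat \<times> nat \<Rightarrow> nat \<times> nat" where
  "sigma p ps = (\<lambda>(x, y). (p x, ps x y))"

end

theory Submission
  imports Defs
begin

lemma cmap_pow:
  assumes "x < m" "y < n" "m \<ge> 2" "n \<ge> 1"
  shows "(cmap m n ^^ K) (x, y) = ((x + K) mod m, (y + (x + K) div m) mod n)"
proof (induction K)
  case 0
  then show ?case using assms by simp
next
  case (Suc K)
  have m1: "m - 1 \<noteq> (x+K) mod m \<Longrightarrow> Suc ((x+K) mod m) \<noteq> m"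
    by auto
  have lt: "(x+K) mod m < m" using assms by simp
  show ?case
  proof (cases "(x+K) mod m = m - 1")
    case True
    then have "Suc ((x+K) mod m) = m" using assms by simp
    then show ?thesis using Suc True
      by (simp add: cmap_def mod_Suc div_Suc mod_Suc_eq)
  next
    case False
    then have "Suc ((x+K) mod m) \<noteq> m" using assms by simp
    then show ?thesis using Suc False
      by (simp add: cmap_def mod_Suc div_Suc)
  qed
qed

theorem lemma4p9:
  fixes m n :: nat and p :: "nat \<Rightarrow> nat" and ps :: "nat \<Rightarrow> nat \<Rightarrow> nat"
    and i b :: nat and t :: int
  assumes "m \<ge> 2" and "n \<ge> 2"
    and "bij_betw p {..<m} {..<m}"
    and "\<And>x. x < m \<Longrightarrow> bij_betw (ps x) {..<n} {..<n}"
    and "i < m" and "b > 0"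
    and "num_cycles (\<lambda>y. ps i (nat ((int y + t) mod int n))) {..<n} \<ge> b"
  shows "\<exists>k::int. num_cycles (sigma p ps \<circ> cpow m n k) (grid m n) \<ge> b + 1"
proof -
  define g where "g = (\<lambda>y. ps i (nat ((int y + t) mod int n)))"
  define x0 where "x0 = p i"
  have x0m: "x0 < m" using assms(3,5) unfolding x0_def bij_betw_def by auto
  define q where "q = nat (t mod int n) + n"
  define K where "K = i + m * q - x0"
  have qge: "q \<ge> 1" using assms(2) unfolding q_def by simp
  have "m * q \<ge> m" using qge by simp
  then have xK: "x0 + K = i + m * q" unfolding K_def using x0m by linarith
  have xKmod: "(x0 + K) mod m = i" using xK assms(5) by simp
  have xKdiv: "(x0 + K) div m = q" using xK assms(5) by simp
  define f where "f = sigma p ps \<circ> cpow m n (int K)"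
  have gn: "g y < n" if "y < n" for y
  proof -
    have "nat ((int y + t) mod int n) < n" using assms(2)
      by (simp add: nat_less_iff)
    then show ?thesis using assms(4)[OF assms(5)] unfolding g_def bij_betw_def by auto
  qed
  have fstep: "f (x0, y) = (x0, g y)" if "y < n" for y
  proof -
    have "cpow m n (int K) (x0, y) = (i, (y + q) mod n)"
      unfolding cpow_def using cmap_pow[OF x0m that assms(1)] assms(2) xKmod xKdiv by simp
    moreover have "(y + q) mod n = nat ((int y + t) mod int n)"
    proof -
      have "int ((y + q) mod n) = (int y + int q) mod int n" by (simp add: zmod_int)
      also have "int q = t mod int n + int n" unfolding q_def using assms(2) by simp
      also have "(int y + (t mod int n + int n)) mod int n = (int y + t) mod int n"
        by (metis add.assoc mod_add_right_eq mod_add_self2)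
      finally show ?thesis by simp
    qed
    ultimately show ?thesis unfolding f_def sigma_def g_def x0_def by simp
  qed
  have fpow: "(f ^^ k) (x0, y) = (x0, (g ^^ k) y) \<and> (g ^^ k) y < n" if "y < n" for y k
    using that by (induction k) (auto simp: fstep gn)
  define Of where "Of = (\<lambda>z. {(f ^^ k) z | k. True})"
  define Og where "Og = (\<lambda>z. {(g ^^ k) z | k. True})"
  have Orow: "Of (x0, y) = Pair x0 ` Og y" if "y < n" for y
    unfolding Of_def Og_def using fpow[OF that] by auto
  define x1 :: nat where "x1 = (if x0 = 0 then 1 else 0)"
  have x1: "x1 < m" "x1 \<noteq> x0" using assms(1) unfolding x1_def by auto
  have row_img: "Of ` ({x0} \<times> {..<n}) = (\<lambda>S. Pair x0 ` S) ` (Og ` {..<n})"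
    using Orow by (force simp: image_image)
  have inj: "inj (\<lambda>S. Pair x0 ` S)" by (simp add: inj_on_def inj_image_eq_iff)
  have card_row: "card (Of ` ({x0} \<times> {..<n})) = card (Og ` {..<n})"
    unfolding row_img by (rule card_image) (meson inj inj_on_subset subset_UNIV)
  have notin: "Of (x1, 0) \<notin> Of ` ({x0} \<times> {..<n})"
  proof
    assume "Of (x1, 0) \<in> Of ` ({x0} \<times> {..<n})"
    then obtain y where y: "y < n" "Of (x1, 0) = Of (x0, y)" by auto
    have "(x1, 0) \<in> Of (x1, 0)" unfolding Of_def by (metis (mono_tags) funpow_0 mem_Collect_eq)
    then have "(x1, 0) \<in> Pair x0 ` Og y" using y Orow by simp
    then show False using x1 by auto
  qed
  have sub: "insert (Of (x1, 0)) (Of ` ({x0} \<times> {..<n})) \<subseteq> Of ` grid m n"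
    unfolding grid_def using x1 x0m assms(2) by auto
  have fin: "finite (Of ` grid m n)" unfolding grid_def by simp
  have "b + 1 \<le> card (Og ` {..<n}) + 1"
    using assms(7) unfolding Og_def g_def num_cycles_def by simp
  also have "\<dots> = card (insert (Of (x1, 0)) (Of ` ({x0} \<times> {..<n})))"
    using notin card_row by simp
  also have "\<dots> \<le> card (Of ` grid m n)" using card_mono[OF fin sub] .
  finally show ?thesis unfolding num_cycles_def Of_def f_def by blast
qed

end
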